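(* Let $\lambda\in k$. (i) Suppose $(A,\circ,P,\omega)$ is a Rota–Baxter symplectic Leibniz algebra of weight $\lambda$. Define $\succ,\prec$ on $A$ by $\omega(x\prec y,z)=\omega(x,y\circ z+z\circ y)$ and $\omega(x\succ y,z)=-\omega(y,x\circ z)$ for all $x,y,z$ (these define a Leibniz-dendriform algebra with associated Leibniz algebra $(A,\circ)$). Then $(A,\succ,\prec,P,\omega)$ is a quadratic Rota–Baxter Leibniz-dendriform algebra of weight $\lambda$. (ii) Conversely, if $(A,\succ,\prec,P,\omega)$ is a quadratic Rota–Baxter Leibniz-dendriform algebra of weight $\lambda$, then $(A,\circ,P,\omega)$ with $\circ=\succ+\prec$ is a Rota–Baxter symplectic Leibniz algebra of weight $\lambda$.
   Context: Vector spaces are finite-dimensional over a field $k$. A Leibniz algebra is a vector space with bilinear $\circ$ such that $x\circ(y\circ z)=(x\circ y)\circ z+y\circ(x\circ z)$. A symplectic Leibniz algebra is a Leibniz algebra $(A,\circ)$ with a non-degenerate symmetric bilinear form $\omega$ such that $\omega(z,x\circ y)=-\omega(y,x\circ z)+\omega(x,y\circ z+z\circ y)$ for all $x,y,z$. A Rota–Baxter operator of weight $\lambda$ on $(A,\circ)$ is a linear $P$ with $P(x)\circ P(y)=P(P(x)\circ y+x\circ P(y)+\lambda x\circ y)$; $(A,\circ,P,\omega)$ is a Rota–Baxter symplectic Leibniz algebra of weight $\lambda$ if $(A,\circ,\omega)$ is symplectic, $P$ is a Rota–Baxter operator of weight $\lambda$ and $\omega(P(x),y)+\omega(x,P(y))+\lambda\omega(x,y)=0$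 for all $x,y$. A Leibniz-dendriform algebra is a vector space $A$ with bilinear operations $\succ,\prec$ such that, with $x\circ y:=x\succ y+x\prec y$, for all $x,y,z$: $(x\circ y)\succ z=x\succ(y\succ z)-y\succ(x\succ z)$, $y\prec(x\circ z)+(x\succ y)\prec z=x\succ(y\prec z)$, $x\prec(y\circ z)=(x\prec y)\prec z+y\succ(x\prec z)$. A quadratic Leibniz-dendriform algebra is one with a non-degenerate symmetric bilinear form $\omega$ with $\omega(x\prec y,z)=\omega(x,y\circ z+z\circ y)$ and $\omega(x\succ y,z)=-\omega(y,x\circ z)$ for all $x,y,z$. A Rota–Baxter operator of weight $\lambda$ on $(A,\succ,\prec)$ is a linear $P$ with $P(x)\succ P(y)=P(P(x)\succ y+x\succ P(y)+\lambda x\succ y)$ and $P(x)\prec P(y)=P(P(x)\prec y+x\prec P(y)+\lambda x\prec y)$. $(A,\succ,\prec,P,\omega)$ is a quadratic Rota–Baxter Leibniz-dendriform algebra of weight $\lambda$ if $(A,\succ,\prec,\omega)$ is quadratic, $P$ is a Rota–Baxter operator of weight $\lambda$, and $\omega(P(x),y)+\omega(x,P(y))+\lambda\omega(x,y)=0$ for all $x,y$. *)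

theory Defs
  imports Complex_Main
begin

definition fd_vector_space :: "('k::field \<Rightarrow> 'v::ab_group_add \<Rightarrow> 'v) \<Rightarrow> bool" where
  "fd_vector_space scale \<longleftrightarrow> vector_space scale \<and>
     (\<exists>B. finite B \<and> module.span scale B = UNIV)"

definition bilinear_op :: "('k::field \<Rightarrow> 'v::ab_group_add \<Rightarrow> 'v) \<Rightarrow> ('v \<Rightarrow> 'v \<Rightarrow> 'v) \<Rightarrow> bool" where
  "bilinear_op scale m \<longleftrightarrow> (\<forall>x. Vector_Spaces.linear scale scale (m x))
     \<and> (\<forall>y. Vector_Spaces.linear scale scale (\<lambda>x. m x y))"

definition bilinear_form :: "('k::field \<Rightarrow> 'v::ab_group_add \<Rightarrow> 'v) \<Rightarrow> ('v \<Rightarrow> 'v \<Rightarrow> 'k) \<Rightarrow> bool" where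
  "bilinear_form scale w \<longleftrightarrow> (\<forall>x. Vector_Spaces.linear scale (*) (w x))
     \<and> (\<forall>y. Vector_Spaces.linear scale (*) (\<lambda>x. w x y))"

definition nondeg_sym_form :: "('k::field \<Rightarrow> 'v::ab_group_add \<Rightarrow> 'v) \<Rightarrow> ('v \<Rightarrow> 'v \<Rightarrow> 'k) \<Rightarrow> bool" where
  "nondeg_sym_form scale w \<longleftrightarrow> bilinear_form scale w \<and> (\<forall>x y. w x y = w y x)
     \<and> (\<forall>x. (\<forall>y. w x y = 0) \<longrightarrow> x = 0)"

definition leibniz_algebra :: "('k::field \<Rightarrow> 'v::ab_group_add \<Rightarrow> 'v) \<Rightarrow> ('v \<Rightarrow> 'v \<Rightarrow> 'v) \<Rightarrow> bool" where
  "leibniz_algebra scale m \<longleftrightarrow> bilinear_op scale m \<and>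
     (\<forall>x y z. m x (m y z) = m (m x y) z + m y (m x z))"

definition symplectic_leibniz :: "('k::field \<Rightarrow> 'v::ab_group_add \<Rightarrow> 'v) \<Rightarrow> ('v \<Rightarrow> 'v \<Rightarrow> 'v) \<Rightarrow> ('v \<Rightarrow> 'v \<Rightarrow> 'k) \<Rightarrow> bool" where
  "symplectic_leibniz scale m w \<longleftrightarrow> leibniz_algebra scale m \<and> nondeg_sym_form scale w \<and>
     (\<forall>x y z. w z (m x y) = - w y (m x z) + w x (m y z + m z y))"

definition rota_baxter_op :: "('k::field \<Rightarrow> 'v::ab_group_add \<Rightarrow> 'v) \<Rightarrow> 'k \<Rightarrow> ('v \<Rightarrow> 'v \<Rightarrow> 'v) \<Rightarrow> ('v \<Rightarrow> 'v) \<Rightarrow> bool" where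
  "rota_baxter_op scale lam m P \<longleftrightarrow> Vector_Spaces.linear scale scale P \<and>
     (\<forall>x y. m (P x) (P y) = P (m (P x) y + m x (P y) + scale lam (m x y)))"

definition form_compatible :: "'k::field \<Rightarrow> ('v \<Rightarrow> 'v) \<Rightarrow> ('v \<Rightarrow> 'v \<Rightarrow> 'k) \<Rightarrow> bool" where
  "form_compatible lam P w \<longleftrightarrow> (\<forall>x y. w (P x) y + w x (P y) + lam * w x y = 0)"

definition rb_symplectic_leibniz ::
  "('k::field \<Rightarrow> 'v::ab_group_add \<Rightarrow> 'v) \<Rightarrow> 'k \<Rightarrow> ('v \<Rightarrow> 'v \<Rightarrow> 'v) \<Rightarrow> ('v \<Rightarrow> 'v) \<Rightarrow> ('v \<Rightarrow> 'v \<Rightarrow> 'k) \<Rightarrow> bool" where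
  "rb_symplectic_leibniz scale lam m P w \<longleftrightarrow> symplectic_leibniz scale m w \<and>
     rota_baxter_op scale lam m P \<and> form_compatible lam P w"

definition leibniz_dendriform ::
  "('k::field \<Rightarrow> 'v::ab_group_add \<Rightarrow> 'v) \<Rightarrow> ('v \<Rightarrow> 'v \<Rightarrow> 'v) \<Rightarrow> ('v \<Rightarrow> 'v \<Rightarrow> 'v) \<Rightarrow> bool" where
  "leibniz_dendriform scale sc pr \<longleftrightarrow> bilinear_op scale sc \<and> bilinear_op scale pr \<and>
     (let m = (\<lambda>x y. sc x y + pr x y) in
      (\<forall>x y z. sc (m x y) z = sc x (sc y z) - sc y (sc x z)) \<and>
      (\<forall>x y z. pr y (m x z) + pr (sc x y) z = sc x (pr y z)) \<and>
      (\<forall>x y z. pr x (m y z) = pr (pr x y) z + sc y (pr x z)))"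

definition quadratic_leibniz_dendriform ::
  "('k::field \<Rightarrow> 'v::ab_group_add \<Rightarrow> 'v) \<Rightarrow> ('v \<Rightarrow> 'v \<Rightarrow> 'v) \<Rightarrow> ('v \<Rightarrow> 'v \<Rightarrow> 'v) \<Rightarrow> ('v \<Rightarrow> 'v \<Rightarrow> 'k) \<Rightarrow> bool" where
  "quadratic_leibniz_dendriform scale sc pr w \<longleftrightarrow> leibniz_dendriform scale sc pr \<and>
     nondeg_sym_form scale w \<and>
     (let m = (\<lambda>x y. sc x y + pr x y) in
      (\<forall>x y z. w (pr x y) z = w x (m y z + m z y)) \<and>
      (\<forall>x y z. w (sc x y) z = - w y (m x z)))"

definition quadratic_rb_leibniz_dendriform ::
  "('k::field \<Rightarrow> 'v::ab_group_add \<Rightarrow> 'v) \<Rightarrow> 'k \<Rightarrow> ('v \<Rightarrow> 'v \<Rightarrow> 'v) \<Rightarrow> ('v \<Rightarrow> 'v \<Rightarrow> 'v) \<Rightarrow> ('v \<Rightarrow> 'v) \<Rightarrow> ('v \<Rightarrow> 'v \<Rightarrow> 'k) \<Rightarrow> bool" where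
  "quadratic_rb_leibniz_dendriform scale lam sc pr P w \<longleftrightarrow>
     quadratic_leibniz_dendriform scale sc pr w \<and>
     rota_baxter_op scale lam sc P \<and> rota_baxter_op scale lam pr P \<and> form_compatible lam P w"

end

theory Submission
  imports Defs
begin

lemma lin_add: "Vector_Spaces.linear s t f \<Longrightarrow> f (x+y) = f x + f y" by (simp add: Vector_Spaces.linear_iff)
lemma lin_scale: "Vector_Spaces.linear s t f \<Longrightarrow> f (s c x) = t c (f x)" by (simp add: Vector_Spaces.linear_iff)
lemma lin_diff: "Vector_Spaces.linear s t f \<Longrightarrow> f (x-y) = f x - f y"
  using module_hom.diff module_hom_iff_linear by metis
lemma lin_neg: "Vector_Spaces.linear s t f \<Longrightarrow> f (- x) = - f x"
  using module_hom.neg module_hom_iff_linear by metis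
lemma lin_zero: "Vector_Spaces.linear s t f \<Longrightarrow> f 0 = 0"
  using module_hom.zero module_hom_iff_linear by metis

lemma vs_field: "vector_space ((*) :: 'k::field \<Rightarrow> 'k \<Rightarrow> 'k)"
  by (unfold_locales) (auto simp: algebra_simps)

lemma linI: "vector_space s \<Longrightarrow> vector_space t \<Longrightarrow> (\<And>x y. f (x+y) = f x + f y) \<Longrightarrow>
   (\<And>c x. f (s c x) = t c (f x)) \<Longrightarrow> Vector_Spaces.linear s t f"
  by (simp add: Vector_Spaces.linear_iff)

lemma bo_add1: "bilinear_op s m \<Longrightarrow> m (a+b) c = m a c + m b c"
  unfolding bilinear_op_def using lin_add[of s s "\<lambda>x. m x c"] by blast
lemma bo_add2: "bilinear_op s m \<Longrightarrow> m c (a+b) = m c a + m c b"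
  unfolding bilinear_op_def using lin_add[of s s "m c"] by blast
lemma bo_scale1: "bilinear_op s m \<Longrightarrow> m (s k a) c = s k (m a c)"
  unfolding bilinear_op_def using lin_scale[of s s "\<lambda>x. m x c"] by blast
lemma bo_scale2: "bilinear_op s m \<Longrightarrow> m c (s k a) = s k (m c a)"
  unfolding bilinear_op_def using lin_scale[of s s "m c"] by blast
lemma bo_diff1: "bilinear_op s m \<Longrightarrow> m (a-b) c = m a c - m b c"
  unfolding bilinear_op_def using lin_diff[of s s "\<lambda>x. m x c"] by blast
lemma bo_diff2: "bilinear_op s m \<Longrightarrow> m c (a-b) = m c a - m c b"
  unfolding bilinear_op_def using lin_diff[of s s "m c"] by blast
lemma bo_neg1: "bilinear_op s m \<Longrightarrow> m (-a) c = - m a c"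
  unfolding bilinear_op_def using lin_neg[of s s "\<lambda>x. m x c"] by blast
lemma bo_neg2: "bilinear_op s m \<Longrightarrow> m c (-a) = - m c a"
  unfolding bilinear_op_def using lin_neg[of s s "m c"] by blast
lemma bf_add1: "bilinear_form s w \<Longrightarrow> w (a+b) c = w a c + w b c"
  unfolding bilinear_form_def using lin_add[of s "(*)" "\<lambda>x. w x c"] by blast
lemma bf_add2: "bilinear_form s w \<Longrightarrow> w c (a+b) = w c a + w c b"
  unfolding bilinear_form_def using lin_add[of s "(*)" "w c"] by blast
lemma bf_scale1: "bilinear_form s w \<Longrightarrow> w (s k a) c = k * w a c"
  unfolding bilinear_form_def using lin_scale[of s "(*)" "\<lambda>x. w x c"] by blast
lemma bf_scale2: "bilinear_form s w \<Longrightarrow> w c (s k a) = k * w c a"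
  unfolding bilinear_form_def using lin_scale[of s "(*)" "w c"] by blast
lemma bf_diff1: "bilinear_form s w \<Longrightarrow> w (a-b) c = w a c - w b c"
  unfolding bilinear_form_def using lin_diff[of s "(*)" "\<lambda>x. w x c"] by blast
lemma bf_diff2: "bilinear_form s w \<Longrightarrow> w c (a-b) = w c a - w c b"
  unfolding bilinear_form_def using lin_diff[of s "(*)" "w c"] by blast
lemma bf_neg1: "bilinear_form s w \<Longrightarrow> w (-a) c = - w a c"
  unfolding bilinear_form_def using lin_neg[of s "(*)" "\<lambda>x. w x c"] by blast
lemma bf_neg2: "bilinear_form s w \<Longrightarrow> w c (-a) = - w c a"
  unfolding bilinear_form_def using lin_neg[of s "(*)" "w c"] by blast
lemma nd_eq: "nondeg_sym_form s w \<Longrightarrow> (\<And>z. w a z = w b z) \<Longrightarrow> a = b"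
proof -
  assume N: "nondeg_sym_form s w" and E: "\<And>z. w a z = w b z"
  have B: "bilinear_form s w" using N unfolding nondeg_sym_form_def by blast
  have "\<forall>z. w (a - b) z = 0" using E by (simp add: bf_diff1[OF B])
  then have "a - b = 0" using N unfolding nondeg_sym_form_def by blast
  then show "a = b" by simp
qed

lemma part2:
  fixes scale :: "'k::field \<Rightarrow> 'v::ab_group_add \<Rightarrow> 'v"
  assumes vs: "vector_space scale"
  and H: "quadratic_rb_leibniz_dendriform scale lam sc pr P w"
  shows "rb_symplectic_leibniz scale lam (\<lambda>x y. sc x y + pr x y) P w"
proof -
  from H have LD: "leibniz_dendriform scale sc pr" and ND: "nondeg_sym_form scale w"
    and q1: "\<And>x y z. w (pr x y) z = w x ((sc y z + pr y z) + (sc z y + pr z y))"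
    and q2: "\<And>x y z. w (sc x y) z = - w y (sc x z + pr x z)"
    and rbs: "rota_baxter_op scale lam sc P" and rbp: "rota_baxter_op scale lam pr P"
    and fc: "form_compatible lam P w"
    unfolding quadratic_rb_leibniz_dendriform_def quadratic_leibniz_dendriform_def Let_def by auto
  from LD have bs: "bilinear_op scale sc" and bp: "bilinear_op scale pr"
    and d1: "\<And>x y z. sc (sc x y + pr x y) z = sc x (sc y z) - sc y (sc x z)"
    and d2: "\<And>x y z. pr y (sc x z + pr x z) + pr (sc x y) z = sc x (pr y z)"
    and d3: "\<And>x y z. pr x (sc y z + pr y z) = pr (pr x y) z + sc y (pr x z)"
    unfolding leibniz_dendriform_def Let_def by auto
  have pr1: "\<And>a b c. pr (a+b) c = pr a c + pr b c" using bp by (rule bo_add1)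
  have BF: "bilinear_form scale w" using ND unfolding nondeg_sym_form_def by blast
  have w1: "\<And>a b c. w (a+b) c = w a c + w b c" by (rule bf_add1[OF BF])
  have wsym: "\<And>a b. w a b = w b a" using ND unfolding nondeg_sym_form_def by auto
  let ?m = "\<lambda>x y. sc x y + pr x y"
  have sdist: "\<And>c a b. scale c (a+b) = scale c a + scale c b"
    using vs by (simp add: vector_space_def)
  have bm: "bilinear_op scale ?m"
    unfolding bilinear_op_def
    by (auto intro!: linI vs simp: bo_add1[OF bs] bo_add1[OF bp] bo_add2[OF bs] bo_add2[OF bp]
        bo_scale1[OF bs] bo_scale1[OF bp] bo_scale2[OF bs] bo_scale2[OF bp] sdist algebra_simps)
  have leib: "\<And>x y z. ?m x (?m y z) = ?m (?m x y) z + ?m y (?m x z)"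
  proof -
    fix x y z
    have "sc x (sc y z + pr y z) = sc x (sc y z) + sc x (pr y z)"
      by (rule bo_add2[OF bs])
    moreover have "sc y (sc x z + pr x z) = sc y (sc x z) + sc y (pr x z)"
      by (rule bo_add2[OF bs])
    moreover have "sc x (pr y z) = pr y (sc x z + pr x z) + pr (sc x y) z" using d2 by metis
    moreover have "sc (sc x y + pr x y) z = sc x (sc y z) - sc y (sc x z)" using d1 by metis
    moreover have "pr x (sc y z + pr y z) = pr (pr x y) z + sc y (pr x z)" using d3 by metis
    moreover have "pr (sc x y + pr x y) z = pr (sc x y) z + pr (pr x y) z" using pr1 by metis
    ultimately show "?m x (?m y z) = ?m (?m x y) z + ?m y (?m x z)"
      by (simp only:) (simp add: algebra_simps)
  qed
  have symp: "\<And>x y z. w z (?m x y) = - w y (?m x z) + w x (?m y z + ?m z y)"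
    using q1 q2 w1 wsym by (metis add.commute diff_conv_add_uminus add_diff_cancel)
  have rbm: "rota_baxter_op scale lam ?m P"
    using rbs rbp unfolding rota_baxter_op_def
    by (auto simp: lin_add bo_add1[OF bs] bo_add1[OF bp] bo_add2[OF bs] bo_add2[OF bp] sdist algebra_simps)
  show ?thesis unfolding rb_symplectic_leibniz_def symplectic_leibniz_def leibniz_algebra_def
    using bm leib symp ND rbm fc by blast
qed

lemma part1:
  fixes scale :: "'k::field \<Rightarrow> 'v::ab_group_add \<Rightarrow> 'v"
  assumes vs: "vector_space scale"
  and H: "rb_symplectic_leibniz scale lam m P w"
  and hpr: "\<And>x y z. w (pr x y) z = w x (m y z + m z y)"
  and hsc: "\<And>x y z. w (sc x y) z = - w y (m x z)"
  shows "quadratic_rb_leibniz_dendriform scale lam sc pr P w \<and> (\<forall>x y. m x y = sc x y + pr x y)"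
proof -
  from H have bm: "bilinear_op scale m" and leib: "\<And>x y z. m x (m y z) = m (m x y) z + m y (m x z)"
    and symp: "\<And>x y z. w z (m x y) = - w y (m x z) + w x (m y z + m z y)"
    and ND: "nondeg_sym_form scale w" and rbm: "rota_baxter_op scale lam m P"
    and fc: "form_compatible lam P w"
    unfolding rb_symplectic_leibniz_def symplectic_leibniz_def leibniz_algebra_def by blast+
  have BF: "bilinear_form scale w" using ND unfolding nondeg_sym_form_def by blast
  have wsym: "\<And>a b. w a b = w b a" using ND unfolding nondeg_sym_form_def by auto
  have Plin: "Vector_Spaces.linear scale scale P" using rbm unfolding rota_baxter_op_def by blast
  have rb: "\<And>x y. m (P x) (P y) = P (m (P x) y + m x (P y) + scale lam (m x y))"
    using rbm unfolding rota_baxter_op_def by blast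
  have c1: "\<And>a b. w (P a) b = - (w a (P b) + lam * w a b)"
  proof -
    fix a b
    have "w (P a) b + w a (P b) + lam * w a b = 0" using fc unfolding form_compatible_def by blast
    then show "w (P a) b = - (w a (P b) + lam * w a b)" by (metis add.assoc eq_neg_iff_add_eq_0)
  qed
  have c2: "\<And>a b. w a (P b) = - (w (P a) b + lam * w a b)"
  proof -
    fix a b
    have "w (P a) b + w a (P b) + lam * w a b = 0" using fc unfolding form_compatible_def by blast
    then show "w a (P b) = - (w (P a) b + lam * w a b)" by (metis add.assoc add.commute eq_neg_iff_add_eq_0)
  qed
  have sdist: "\<And>c a b. scale c (a+b) = scale c a + scale c b"
    using vs by (simp add: vector_space_def)
  note W = bf_add1[OF BF] bf_add2[OF BF] bf_scale1[OF BF] bf_scale2[OF BF]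
    bf_diff1[OF BF] bf_diff2[OF BF] bf_neg1[OF BF] bf_neg2[OF BF]
  note M = bo_add1[OF bm] bo_add2[OF bm] bo_scale1[OF bm] bo_scale2[OF bm]
    bo_diff1[OF bm] bo_diff2[OF bm] bo_neg1[OF bm] bo_neg2[OF bm]
  note eqI = nd_eq[OF ND]
  have meq: "\<And>x y. m x y = sc x y + pr x y"
  proof (rule eqI)
    fix x y z
    have "w (m x y) z = w z (m x y)" by (rule wsym)
    also have "\<dots> = - w y (m x z) + w x (m y z + m z y)" by (rule symp)
    also have "\<dots> = w (sc x y + pr x y) z" by (simp only: bf_add1[OF BF] hsc hpr)
    finally show "w (m x y) z = w (sc x y + pr x y) z" .
  qed
  have sq0: "\<And>a c. m (m a a) c = 0" using leib by (metis add_cancel_left_left)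
  have symz: "\<And>a b c. m (m a b) c = - m (m b a) c"
  proof -
    fix a b c
    have "m (m (a+b) (a+b)) c = 0" by (rule sq0)
    then have "m (m a b) c + m (m b a) c = 0" by (simp add: M sq0 add.commute)
    then show "m (m a b) c = - m (m b a) c" by (simp add: eq_neg_iff_add_eq_0)
  qed
  have bsc: "bilinear_op scale sc" unfolding bilinear_op_def
  proof (intro conjI allI linI[OF vs vs])
    fix x a b
    show "sc x (a+b) = sc x a + sc x b" by (rule eqI) (simp add: W M hsc algebra_simps)
  next
    fix x c a
    show "sc x (scale c a) = scale c (sc x a)" by (rule eqI) (simp add: W M hsc algebra_simps)
  next
    fix y a b
    show "sc (a+b) y = sc a y + sc b y" by (rule eqI) (simp add: W M hsc algebra_simps)
  next
    fix y c a
    show "sc (scale c a) y = scale c (sc a y)" by (rule eqI) (simp add: W M hsc algebra_simps)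
  qed
  have bpr: "bilinear_op scale pr" unfolding bilinear_op_def
  proof (intro conjI allI linI[OF vs vs])
    fix x a b
    show "pr x (a+b) = pr x a + pr x b" by (rule eqI) (simp add: W M hpr algebra_simps)
  next
    fix x c a
    show "pr x (scale c a) = scale c (pr x a)" by (rule eqI) (simp add: W M hpr algebra_simps)
  next
    fix y a b
    show "pr (a+b) y = pr a y + pr b y" by (rule eqI) (simp add: W M hpr algebra_simps)
  next
    fix y c a
    show "pr (scale c a) y = scale c (pr a y)" by (rule eqI) (simp add: W M hpr algebra_simps)
  qed
  have d1: "\<And>x y z. sc (m x y) z = sc x (sc y z) - sc y (sc x z)"
  proof (rule eqI)
    fix x y z u
    show "w (sc (m x y) z) u = w (sc x (sc y z) - sc y (sc x z)) u"
      using leib[of x y u] by (simp add: W hsc algebra_simps)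
  qed
  have d2: "\<And>x y z. pr y (m x z) + pr (sc x y) z = sc x (pr y z)"
  proof (rule eqI)
    fix x y z u
    show "w (pr y (m x z) + pr (sc x y) z) u = w (sc x (pr y z)) u"
      using leib[of x z u] leib[of x u z] by (simp add: W M hsc hpr algebra_simps)
  qed
  have d3: "\<And>x y z. pr x (m y z) = pr (pr x y) z + sc y (pr x z)"
  proof (rule eqI)
    fix x y z u
    show "w (pr x (m y z)) u = w (pr (pr x y) z + sc y (pr x z)) u"
      using leib[of y z u] leib[of y u z] symz[of z u y] by (simp add: W M hsc hpr algebra_simps)
  qed
  have rbsc: "\<And>x y. sc (P x) (P y) = P (sc (P x) y + sc x (P y) + scale lam (sc x y))"
  proof (rule eqI)
    fix x y u
    let ?Q = "sc (P x) y + sc x (P y) + scale lam (sc x y)"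
    have E1: "w (P ?Q) u = - (w ?Q (P u) + lam * w ?Q u)" by (rule c1)
    have E2: "w ?Q (P u) = - w y (m (P x) (P u)) - w (P y) (m x (P u)) - lam * w y (m x (P u))"
      by (simp add: W hsc)
    have E3: "w ?Q u = - w y (m (P x) u) - w (P y) (m x u) - lam * w y (m x u)"
      by (simp add: W hsc)
    have E4: "w y (m (P x) (P u)) = - w (P y) (m (P x) u) - w (P y) (m x (P u)) - lam * w (P y) (m x u)
       - lam * w y (m (P x) u) - lam * w y (m x (P u)) - lam * lam * w y (m x u)"
      unfolding rb c2 by (simp add: W algebra_simps)
    have "w (P ?Q) u = - w (P y) (m (P x) u)"
      by (simp only: E1 E2 E3 E4) (simp add: algebra_simps)
    then show "w (sc (P x) (P y)) u = w (P ?Q) u" by (simp add: hsc)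
  qed
  have rbs: "\<And>x y. m (P x) (P y) + m (P y) (P x) = P ((m (P x) y + m y (P x)) + (m x (P y) + m (P y) x) + scale lam (m x y + m y x))"
    using rb by (simp add: lin_add[OF Plin] sdist algebra_simps)
  have rbpr: "\<And>x y. pr (P x) (P y) = P (pr (P x) y + pr x (P y) + scale lam (pr x y))"
  proof (rule eqI)
    fix x y u
    let ?Q = "pr (P x) y + pr x (P y) + scale lam (pr x y)"
    have E1: "w (P ?Q) u = - (w ?Q (P u) + lam * w ?Q u)" by (rule c1)
    have E2: "w ?Q (P u) = w (P x) (m y (P u) + m (P u) y) + w x (m (P y) (P u) + m (P u) (P y)) + lam * w x (m y (P u) + m (P u) y)"
      by (simp add: W hpr)
    have E3: "w ?Q u = w (P x) (m y u + m u y) + w x (m (P y) u + m u (P y)) + lam * w x (m y u + m u y)"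
      by (simp add: W hpr)
    have E4: "w x (m (P y) (P u) + m (P u) (P y)) = - (w (P x) ((m (P y) u + m u (P y)) + (m y (P u) + m (P u) y) + scale lam (m y u + m u y))
       + lam * w x ((m (P y) u + m u (P y)) + (m y (P u) + m (P u) y) + scale lam (m y u + m u y)))"
      unfolding rbs c2 ..
    have "w (P ?Q) u = w (P x) (m (P y) u + m u (P y))"
      by (simp only: E1 E2 E3 E4) (simp add: W algebra_simps)
    then show "w (pr (P x) (P y)) u = w (P ?Q) u" by (simp add: hpr)
  qed
  have meq': "(\<lambda>x y. sc x y + pr x y) = m" by (intro ext) (simp add: meq)
  have LD: "leibniz_dendriform scale sc pr"
    unfolding leibniz_dendriform_def Let_def meq'
    using bsc bpr d1 d2 d3 by (intro conjI allI) blast+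
  have QLD: "quadratic_leibniz_dendriform scale sc pr w"
    unfolding quadratic_leibniz_dendriform_def Let_def meq'
    using LD ND hpr hsc by (intro conjI allI) blast+
  have R1: "rota_baxter_op scale lam sc P" unfolding rota_baxter_op_def using Plin rbsc by blast
  have R2: "rota_baxter_op scale lam pr P" unfolding rota_baxter_op_def using Plin rbpr by blast
  show ?thesis unfolding quadratic_rb_leibniz_dendriform_def using QLD R1 R2 fc meq by blast
qed

theorem mainTheorem14:
  fixes scale :: "'k::field \<Rightarrow> 'v::ab_group_add \<Rightarrow> 'v" and lam :: 'k
  assumes fd: "fd_vector_space scale"
  shows "(\<forall>(m::'v \<Rightarrow> 'v \<Rightarrow> 'v) P (w::'v \<Rightarrow> 'v \<Rightarrow> 'k) sc pr.
            rb_symplectic_leibniz scale lam m P w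
            \<and> (\<forall>x y z. w (pr x y) z = w x (m y z + m z y))
            \<and> (\<forall>x y z. w (sc x y) z = - w y (m x z))
          \<longrightarrow> quadratic_rb_leibniz_dendriform scale lam sc pr P w
              \<and> (\<forall>x y. m x y = sc x y + pr x y))
       \<and> (\<forall>sc pr (P::'v \<Rightarrow> 'v) (w::'v \<Rightarrow> 'v \<Rightarrow> 'k).
            quadratic_rb_leibniz_dendriform scale lam sc pr P w
          \<longrightarrow> rb_symplectic_leibniz scale lam (\<lambda>x y. sc x y + pr x y) P w)"
proof -
  have vs: "vector_space scale" using fd unfolding fd_vector_space_def by blast
  show ?thesis
    apply (rule conjI)
    subgoal using part1[OF vs] by blast
    subgoal using part2[OF vs] by blast
    done
qed

end
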